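(* Let $\Gamma\curvearrowright^{\sigma}(X,\mu)$ be a probability measure preserving action of a countable group $\Gamma$ with spectral gap. Then the natural homomorphism $\mathrm H^1(\Gamma,\mathrm L^2(X,\mathbb R))\to\mathrm H^1(\Gamma,\mathrm L^0(X,\mathbb R))$ is injective.
   Context: $\Gamma$ acts on functions by $\sigma_g(f)(x)=f(g^{-1}x)$. The action has spectral gap if the Koopman representation on $\mathrm L^2(X,\mu)\ominus\mathbb C1$ has no almost invariant vectors; equivalently there are finite $F\subset\Gamma$ and $C>0$ with $\|\xi-\int\xi\,d\mu\|_2\le C\max_{g\in F}\|\sigma_g(\xi)-\xi\|_2$ for all $\xi\in\mathrm L^2(X)$. $\mathrm H^1(\Gamma,\mathcal A)$ is the group of 1-cocycles $c(gh)=c(g)+\sigma_g(c(h))$ modulo 1-coboundaries $c(g)=\sigma_g(b)-b$, $b\in\mathcal A$; $\mathrm L^0(X,\mathbb R)$ denotes a.e.-classes of measurable real functions. *)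

theory Defs
  imports "HOL-Probability.Probability" "HOL-Algebra.Group"
begin

definition pmp_action :: "('g, 'b) monoid_scheme \<Rightarrow> 'a measure \<Rightarrow> ('g \<Rightarrow> 'a \<Rightarrow> 'a) \<Rightarrow> bool" where
  "pmp_action G M T \<longleftrightarrow>
     group G \<and> prob_space M \<and>
     (\<forall>g\<in>carrier G. T g \<in> measurable M M \<and> distr M M (T g) = M) \<and>
     (\<forall>x\<in>space M. T \<one>\<^bsub>G\<^esub> x = x) \<and>
     (\<forall>g\<in>carrier G. \<forall>h\<in>carrier G. \<forall>x\<in>space M. T (g \<otimes>\<^bsub>G\<^esub> h) x = T g (T h x))"

definition koopman :: "('g, 'b) monoid_scheme \<Rightarrow> ('g \<Rightarrow> 'a \<Rightarrow> 'a) \<Rightarrow> 'g \<Rightarrow> ('a \<Rightarrow> 'c) \<Rightarrow> ('a \<Rightarrow> 'c)" where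
  "koopman G T g f = (\<lambda>x. f (T (inv\<^bsub>G\<^esub> g) x))"

definition square_integrable :: "'a measure \<Rightarrow> ('a \<Rightarrow> 'c::real_normed_vector) \<Rightarrow> bool" where
  "square_integrable M f \<longleftrightarrow> f \<in> borel_measurable M \<and> integrable M (\<lambda>x. (norm (f x))\<^sup>2)"

text \<open>Spectral gap: the Koopman representation on L^2(X) \<ominus> C1 (complex L^2) has no
  almost invariant vectors, i.e. there is no sequence of unit vectors orthogonal to the
  constants which is asymptotically invariant under every group element.\<close>
definition spectral_gap :: "('g, 'b) monoid_scheme \<Rightarrow> 'a measure \<Rightarrow> ('g \<Rightarrow> 'a \<Rightarrow> 'a) \<Rightarrow> bool" where
  "spectral_gap G M T \<longleftrightarrow>
     \<not> (\<exists>\<xi> :: nat \<Rightarrow> 'a \<Rightarrow> complex.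
          (\<forall>n. square_integrable M (\<xi> n) \<and>
               (\<integral>x. (cmod (\<xi> n x))\<^sup>2 \<partial>M) = 1 \<and>
               (\<integral>x. \<xi> n x \<partial>M) = 0) \<and>
          (\<forall>g\<in>carrier G.
             (\<lambda>n. \<integral>x. (cmod (koopman G T g (\<xi> n) x - \<xi> n x))\<^sup>2 \<partial>M) \<longlonglongrightarrow> 0))"

definition cocycle_eq :: "('g, 'b) monoid_scheme \<Rightarrow> 'a measure \<Rightarrow> ('g \<Rightarrow> 'a \<Rightarrow> 'a) \<Rightarrow> ('g \<Rightarrow> 'a \<Rightarrow> real) \<Rightarrow> bool" where
  "cocycle_eq G M T c \<longleftrightarrow>
     (\<forall>g\<in>carrier G. \<forall>h\<in>carrier G.
        AE x in M. c (g \<otimes>\<^bsub>G\<^esub> h) x = c g x + koopman G T g (c h) x)"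

definition L2_cocycle :: "('g, 'b) monoid_scheme \<Rightarrow> 'a measure \<Rightarrow> ('g \<Rightarrow> 'a \<Rightarrow> 'a) \<Rightarrow> ('g \<Rightarrow> 'a \<Rightarrow> real) \<Rightarrow> bool" where
  "L2_cocycle G M T c \<longleftrightarrow> (\<forall>g\<in>carrier G. square_integrable M (c g)) \<and> cocycle_eq G M T c"

definition L2_coboundary :: "('g, 'b) monoid_scheme \<Rightarrow> 'a measure \<Rightarrow> ('g \<Rightarrow> 'a \<Rightarrow> 'a) \<Rightarrow> ('g \<Rightarrow> 'a \<Rightarrow> real) \<Rightarrow> bool" where
  "L2_coboundary G M T c \<longleftrightarrow>
     (\<exists>b. square_integrable M b \<and>
          (\<forall>g\<in>carrier G. AE x in M. c g x = koopman G T g b x - b x))"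

definition L0_coboundary :: "('g, 'b) monoid_scheme \<Rightarrow> 'a measure \<Rightarrow> ('g \<Rightarrow> 'a \<Rightarrow> 'a) \<Rightarrow> ('g \<Rightarrow> 'a \<Rightarrow> real) \<Rightarrow> bool" where
  "L0_coboundary G M T c \<longleftrightarrow>
     (\<exists>b. b \<in> borel_measurable M \<and>
          (\<forall>g\<in>carrier G. AE x in M. c g x = koopman G T g b x - b x))"

end

theory Submission
  imports Defs
begin

lemma SI_real: "square_integrable M (f::'a\<Rightarrow>real) \<longleftrightarrow> f \<in> borel_measurable M \<and> integrable M (\<lambda>x. (f x)^2)"
  by (simp add: square_integrable_def)

lemma sq_bound: "((a::real) - b)^2 \<le> 2 * a^2 + 2 * b^2"
proof -
  have "(a - b)^2 + (a + b)^2 = 2 * a^2 + 2 * b^2" by algebra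
  moreover have "0 \<le> (a + b)^2" by simp
  ultimately show ?thesis by linarith
qed

lemma abs_bound: "\<bar>t::real\<bar> \<le> 1 + t^2"
proof -
  have "0 \<le> (\<bar>t\<bar> - 1)^2" by simp
  moreover have "(\<bar>t\<bar> - 1)^2 = t^2 - 2 * \<bar>t\<bar> + 1" by (simp add: power2_eq_square algebra_simps)
  moreover have "0 \<le> t^2" by simp
  ultimately show ?thesis by linarith
qed

lemma SI_diff:
  fixes f g :: "'a \<Rightarrow> real"
  assumes "square_integrable M f" "square_integrable M g"
  shows "square_integrable M (\<lambda>x. f x - g x)"
proof -
  have m: "f \<in> borel_measurable M" "g \<in> borel_measurable M"
    and i: "integrable M (\<lambda>x. (f x)^2)" "integrable M (\<lambda>x. (g x)^2)"
    using assms by (auto simp: SI_real)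
  have "integrable M (\<lambda>x. 2 * (f x)^2 + 2 * (g x)^2)" using i by auto
  moreover have "(\<lambda>x. (f x - g x)^2) \<in> borel_measurable M" using m by measurable
  moreover have "AE x in M. norm ((f x - g x)^2) \<le> norm (2 * (f x)^2 + 2 * (g x)^2)"
  proof (rule AE_I2)
    fix x
    have "(f x - g x)^2 \<le> 2 * (f x)^2 + 2 * (g x)^2" by (rule sq_bound)
    then show "norm ((f x - g x)^2) \<le> norm (2 * (f x)^2 + 2 * (g x)^2)" by simp
  qed
  ultimately have "integrable M (\<lambda>x. (f x - g x)^2)" by (rule Bochner_Integration.integrable_bound)
  then show ?thesis using m by (auto simp: SI_real)
qed

lemma SI_const: "finite_measure M \<Longrightarrow> square_integrable M (\<lambda>x. c::real)"
  by (simp add: SI_real finite_measure.integrable_const)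

lemma SI_divide:
  fixes f :: "'a \<Rightarrow> real"
  assumes "square_integrable M f"
  shows "square_integrable M (\<lambda>x. f x / s)"
  using assms by (auto simp: SI_real power_divide)

lemma SI_integrable:
  fixes f :: "'a \<Rightarrow> real"
  assumes "finite_measure M" "square_integrable M f"
  shows "integrable M f"
proof -
  have m: "f \<in> borel_measurable M" and i: "integrable M (\<lambda>x. (f x)^2)"
    using assms by (auto simp: SI_real)
  have i1: "integrable M (\<lambda>x. 1 + (f x)^2)" using i assms(1) by (auto simp: finite_measure.integrable_const)
  have ae: "AE x in M. norm (f x) \<le> norm (1 + (f x)^2)"
  proof (rule AE_I2)
    fix x
    have "\<bar>f x\<bar> \<le> 1 + (f x)^2" by (rule abs_bound)
    moreover have "0 \<le> 1 + (f x)^2" by simp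
    ultimately show "norm (f x) \<le> norm (1 + (f x)^2)" by simp
  qed
  show ?thesis by (rule Bochner_Integration.integrable_bound[OF i1 m ae])
qed

lemma sg_ineq:
  fixes G :: "('g, 'b) monoid_scheme" and M :: "'a measure" and T :: "'g \<Rightarrow> 'a \<Rightarrow> 'a"
  assumes cG: "countable (carrier G)" and ne: "carrier G \<noteq> {}" and ps: "prob_space M"
    and sg: "spectral_gap G M T"
  shows "\<exists>F C. finite F \<and> F \<subseteq> carrier G \<and> (\<forall>f::'a\<Rightarrow>real. square_integrable M f \<longrightarrow>
      (\<integral>x. (f x - (\<integral>y. f y \<partial>M))^2 \<partial>M) \<le> C * (\<Sum>g\<in>F. \<integral>x. (koopman G T g f x - f x)^2 \<partial>M))"
    (is "?G")
proof (rule ccontr)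
  interpret prob_space M by fact
  assume H: "\<not> ?G"
  define e where "e = from_nat_into (carrier G)"
  define S where "S f F = (\<Sum>g\<in>F. \<integral>x. (koopman G T g f x - f x)^2 \<partial>M)" for f :: "'a \<Rightarrow> real" and F
  have "\<forall>n. \<exists>f. square_integrable M f \<and> (\<integral>x. (f x - (\<integral>y. f y \<partial>M))^2 \<partial>M) > (real n + 1) * S f (e ` {..n})"
  proof
    fix n
    have ein: "e k \<in> carrier G" for k unfolding e_def by (rule from_nat_into[OF ne])
    have fin: "finite (e ` {..n})" by simp
    have sub: "e ` {..n} \<subseteq> carrier G" using ein by auto
    show "\<exists>f. square_integrable M f \<and> (\<integral>x. (f x - (\<integral>y. f y \<partial>M))^2 \<partial>M) > (real n + 1) * S f (e ` {..n})"
    proof (rule ccontr)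
      assume nf: "\<not> (\<exists>f. square_integrable M f \<and> (\<integral>x. (f x - (\<integral>y. f y \<partial>M))^2 \<partial>M) > (real n + 1) * S f (e ` {..n}))"
      have all: "\<forall>f::'a\<Rightarrow>real. square_integrable M f \<longrightarrow>
          (\<integral>x. (f x - (\<integral>y. f y \<partial>M))^2 \<partial>M) \<le> (real n + 1) * (\<Sum>g\<in>e ` {..n}. \<integral>x. (koopman G T g f x - f x)^2 \<partial>M)"
      proof (intro allI impI)
        fix f :: "'a \<Rightarrow> real" assume sif: "square_integrable M f"
        from nf have "\<forall>f. \<not> (square_integrable M f \<and> (\<integral>x. (f x - (\<integral>y. f y \<partial>M))^2 \<partial>M) > (real n + 1) * S f (e ` {..n}))"
          unfolding not_ex .
        then have "\<not> (square_integrable M f \<and> (\<integral>x. (f x - (\<integral>y. f y \<partial>M))^2 \<partial>M) > (real n + 1) * S f (e ` {..n}))"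
          by (rule spec)
        with sif have "\<not> (\<integral>x. (f x - (\<integral>y. f y \<partial>M))^2 \<partial>M) > (real n + 1) * S f (e ` {..n})" by simp
        then show "(\<integral>x. (f x - (\<integral>y. f y \<partial>M))^2 \<partial>M) \<le> (real n + 1) * (\<Sum>g\<in>e ` {..n}. \<integral>x. (koopman G T g f x - f x)^2 \<partial>M)"
          unfolding S_def by linarith
      qed
      have ?G by (intro exI[of _ "e ` {..n}"] exI[of _ "real n + 1"] conjI fin sub all)
      with H show False by (rule notE)
    qed
  qed
  then obtain f where f: "\<And>n. square_integrable M (f n)"
    and fi: "\<And>n. (\<integral>x. (f n x - (\<integral>y. f n y \<partial>M))^2 \<partial>M) > (real n + 1) * S (f n) (e ` {..n})"
  proof -
    from \<open>\<forall>n. _\<close> have "\<exists>f. \<forall>n. square_integrable M (f n) \<and> (\<integral>x. (f n x - (\<integral>y. f n y \<partial>M))^2 \<partial>M) > (real n + 1) * S (f n) (e ` {..n})"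
      by (rule choice)
    then obtain f where "\<forall>n. square_integrable M (f n) \<and> (\<integral>x. (f n x - (\<integral>y. f n y \<partial>M))^2 \<partial>M) > (real n + 1) * S (f n) (e ` {..n})"
      by (rule exE)
    then show ?thesis using that by blast
  qed
  define mu where "mu n = (\<integral>y. f n y \<partial>M)" for n
  define v where "v n = (\<integral>x. (f n x - mu n)^2 \<partial>M)" for n
  have Snn: "0 \<le> S h F" for h F unfolding S_def by (intro sum_nonneg integral_nonneg_AE) auto
  have fi': "v n > (real n + 1) * S (f n) (e ` {..n})" for n using fi[of n] unfolding v_def mu_def .
  have vpos: "v n > 0" for n
  proof -
    have "0 \<le> (real n + 1) * S (f n) (e ` {..n})" using Snn by simp
    then show ?thesis using fi'[of n] by linarith
  qed
  define xi where "xi n x = complex_of_real ((f n x - mu n) / sqrt (v n))" for n x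
  have sq: "(cmod (complex_of_real ((a - b) / sqrt (v n))))^2 = (a - b)^2 / v n" for a b n
    using vpos[of n] by (simp only: norm_of_real power2_abs) (simp add: power_divide)
  have "\<exists>\<xi> :: nat \<Rightarrow> 'a \<Rightarrow> complex.
          (\<forall>n. square_integrable M (\<xi> n) \<and>
               (\<integral>x. (cmod (\<xi> n x))\<^sup>2 \<partial>M) = 1 \<and>
               (\<integral>x. \<xi> n x \<partial>M) = 0) \<and>
          (\<forall>g\<in>carrier G.
             (\<lambda>n. \<integral>x. (cmod (koopman G T g (\<xi> n) x - \<xi> n x))\<^sup>2 \<partial>M) \<longlonglongrightarrow> 0)"
  proof (rule exI[of _ xi], intro conjI allI ballI)
    fix n
    have fm: "f n \<in> borel_measurable M" using f[of n] by (simp add: SI_real)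
    have si: "square_integrable M (\<lambda>x. f n x - mu n)"
      by (intro SI_diff f SI_const) (rule finite_measure_axioms)
    have xieq: "(\<lambda>x. (cmod (xi n x))\<^sup>2) = (\<lambda>x. (f n x - mu n)^2 / v n)"
      unfolding xi_def by (rule ext, rule sq)
    have "(\<lambda>x. (f n x - mu n) / sqrt (v n)) \<in> borel_measurable M" using fm by simp
    then have "xi n \<in> borel_measurable M" unfolding xi_def
      by (rule measurable_compose[OF _ borel_measurable_of_real])
    then show "square_integrable M (xi n)"
      using si unfolding square_integrable_def xieq by (simp add: SI_real)
    show "(\<integral>x. (cmod (xi n x))\<^sup>2 \<partial>M) = 1"
      unfolding xieq using vpos[of n] unfolding v_def by simp
    have fint: "integrable M (f n)" using SI_integrable[OF finite_measure_axioms f] .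
    have "(\<integral>x. (f n x - mu n) / sqrt (v n) \<partial>M) = (\<integral>x. f n x - mu n \<partial>M) / sqrt (v n)"
      by (rule integral_divide_zero)
    also have "(\<integral>x. f n x - mu n \<partial>M) = (\<integral>x. f n x \<partial>M) - (\<integral>x. mu n \<partial>M)"
      by (rule Bochner_Integration.integral_diff[OF fint integrable_const])
    also have "(\<integral>x. mu n \<partial>M) = mu n" by (simp add: prob_space)
    finally have "(\<integral>x. (f n x - mu n) / sqrt (v n) \<partial>M) = 0" unfolding mu_def by simp
    moreover have "(\<integral>x. xi n x \<partial>M) = complex_of_real (\<integral>x. (f n x - mu n) / sqrt (v n) \<partial>M)"
      unfolding xi_def by (rule integral_complex_of_real)
    ultimately show "(\<integral>x. xi n x \<partial>M) = 0" by simp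
  next
    fix g assume g: "g \<in> carrier G"
    obtain k where k: "e k = g" using from_nat_into_surj[OF cG g] e_def by auto
    have eq: "(\<integral>x. (cmod (koopman G T g (xi n) x - xi n x))^2 \<partial>M)
        = (\<integral>x. (koopman G T g (f n) x - f n x)^2 \<partial>M) / v n" for n
    proof -
      have "(\<lambda>x. (cmod (koopman G T g (xi n) x - xi n x))^2)
          = (\<lambda>x. (koopman G T g (f n) x - f n x)^2 / v n)"
      proof
        fix x
        have "koopman G T g (xi n) x - xi n x
            = complex_of_real ((koopman G T g (f n) x - f n x) / sqrt (v n))"
          unfolding xi_def koopman_def by (simp add: diff_divide_distrib)
        then show "(cmod (koopman G T g (xi n) x - xi n x))^2 = (koopman G T g (f n) x - f n x)^2 / v n"
          using sq by simp
      qed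
      then show ?thesis by simp
    qed
    have le: "(\<integral>x. (cmod (koopman G T g (xi n) x - xi n x))^2 \<partial>M) \<le> inverse (real (Suc n))"
      if "k \<le> n" for n
    proof -
      have gin: "g \<in> e ` {..n}" using k that by auto
      have "(\<integral>x. (koopman G T g (f n) x - f n x)^2 \<partial>M) \<le> S (f n) (e ` {..n})"
        unfolding S_def
        by (rule member_le_sum[OF gin]) (auto intro: integral_nonneg_AE)
      then have "(\<integral>x. (koopman G T g (f n) x - f n x)^2 \<partial>M) / v n \<le> S (f n) (e ` {..n}) / v n"
        using vpos[of n] by (simp add: divide_right_mono)
      also have "\<dots> \<le> inverse (real (Suc n))"
      proof -
        have "S (f n) (e ` {..n}) * real (Suc n) \<le> v n" using fi'[of n] by (simp add: algebra_simps)
        then have "S (f n) (e ` {..n}) \<le> inverse (real (Suc n)) * v n"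
          by (simp add: pos_le_divide_eq divide_inverse_commute[symmetric])
        then show ?thesis using vpos[of n] by (simp add: pos_divide_le_eq)
      qed
      finally show ?thesis using eq by simp
    qed
    have nn: "0 \<le> (\<integral>x. (cmod (koopman G T g (xi n) x - xi n x))^2 \<partial>M)" for n
      by (auto intro: integral_nonneg_AE)
    show "(\<lambda>n. \<integral>x. (cmod (koopman G T g (xi n) x - xi n x))\<^sup>2 \<partial>M) \<longlonglongrightarrow> 0"
    proof (rule tendsto_sandwich[OF _ _ tendsto_const LIMSEQ_inverse_real_of_nat])
      show "\<forall>\<^sub>F n in sequentially. 0 \<le> (\<integral>x. (cmod (koopman G T g (xi n) x - xi n x))\<^sup>2 \<partial>M)"
        using nn by simp
      show "\<forall>\<^sub>F n in sequentially. (\<integral>x. (cmod (koopman G T g (xi n) x - xi n x))\<^sup>2 \<partial>M) \<le> inverse (real (Suc n))"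
        unfolding eventually_sequentially using le by blast
    qed
  qed
  with sg show False unfolding spectral_gap_def by (rule notE)
qed


lemma clip_le:
  fixes a u v :: real
  shows "(max (-a) (min a u) - max (-a) (min a v))^2 \<le> (u - v)^2"
proof -
  have "\<bar>max (-a) (min a u) - max (-a) (min a v)\<bar> \<le> \<bar>u - v\<bar>"
    unfolding max_def min_def abs_if by (simp split: if_splits)
  then show ?thesis by (simp add: abs_le_square_iff)
qed

theorem theorem7p4:
  fixes G :: "('g, 'b) monoid_scheme" and M :: "'a measure" and T :: "'g \<Rightarrow> 'a \<Rightarrow> 'a"
    and c1 c2 :: "'g \<Rightarrow> 'a \<Rightarrow> real"
  assumes "countable (carrier G)"
    and "pmp_action G M T"
    and "spectral_gap G M T"
    and "L2_cocycle G M T c1" and "L2_cocycle G M T c2"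
    and "L0_coboundary G M T (\<lambda>g x. c1 g x - c2 g x)"
  shows "L2_coboundary G M T (\<lambda>g x. c1 g x - c2 g x)"
proof -
  have grp: "group G" and ps: "prob_space M"
    using assms(2) unfolding pmp_action_def by auto
  interpret prob_space M by (rule ps)
  have fm: "finite_measure M" by (rule finite_measure_axioms)
  obtain b where bm: "b \<in> borel_measurable M"
    and bc: "\<And>g. g \<in> carrier G \<Longrightarrow> AE x in M. c1 g x - c2 g x = koopman G T g b x - b x"
    using assms(6) unfolding L0_coboundary_def by auto
  note bm[measurable]
  have cSI: "square_integrable M (\<lambda>x. c1 g x - c2 g x)" if "g \<in> carrier G" for g
  proof -
    have "square_integrable M (c1 g)" "square_integrable M (c2 g)"
      using assms(4,5) that unfolding L2_cocycle_def by auto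
    then show ?thesis by (rule SI_diff)
  qed
  have ne: "carrier G \<noteq> {}"
    using monoid.one_closed[OF group.is_monoid[OF grp]] by blast
  obtain F C where Ffin: "finite F" and Fsub: "F \<subseteq> carrier G"
    and SGall: "\<forall>f::'a\<Rightarrow>real. square_integrable M f \<longrightarrow>
      (\<integral>x. (f x - (\<integral>y. f y \<partial>M))^2 \<partial>M) \<le> C * (\<Sum>g\<in>F. \<integral>x. (koopman G T g f x - f x)^2 \<partial>M)"
    using sg_ineq[OF assms(1) ne ps assms(3)] by auto
  define K where "K = max 0 C * (\<Sum>g\<in>F. \<integral>x. (c1 g x - c2 g x)^2 \<partial>M)"
  have Knn: "0 \<le> K" unfolding K_def
    by (intro mult_nonneg_nonneg sum_nonneg integral_nonneg_AE) auto
  define bN where "bN N x = max (- real N) (min (real N) (b x))" for N :: nat and x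
  define mN where "mN N = (\<integral>x. bN N x \<partial>M)" for N
  have bNm[measurable]: "bN N \<in> borel_measurable M" for N unfolding bN_def by measurable
  have bN_abs: "\<bar>bN N x\<bar> \<le> real N" for N x unfolding bN_def by (simp add: abs_le_iff)
  have bNSI: "square_integrable M (bN N)" for N
  proof -
    have "AE x in M. norm ((bN N x)^2) \<le> real N ^ 2"
    proof (rule AE_I2)
      fix x
      have "\<bar>bN N x\<bar>^2 \<le> (real N)^2" by (rule power_mono[OF bN_abs abs_ge_zero])
      then show "norm ((bN N x)^2) \<le> real N ^ 2" by simp
    qed
    moreover have "(\<lambda>x. (bN N x)^2) \<in> borel_measurable M" by measurable
    ultimately have "integrable M (\<lambda>x. (bN N x)^2)"
      by (rule finite_measure.integrable_const_bound[OF fm])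
    then show ?thesis using bNm by (simp add: SI_real)
  qed
  have bNK: "(\<integral>x. (bN N x - mN N)^2 \<partial>M) \<le> K" for N
  proof -
    define S where "S = (\<Sum>g\<in>F. \<integral>x. (koopman G T g (bN N) x - bN N x)^2 \<partial>M)"
    have Snn: "0 \<le> S" unfolding S_def by (intro sum_nonneg integral_nonneg_AE) auto
    have "(\<integral>x. (bN N x - mN N)^2 \<partial>M) \<le> C * S"
      using SGall bNSI unfolding S_def mN_def by blast
    also have "\<dots> \<le> max 0 C * S" using Snn by (intro mult_right_mono) auto
    also have "\<dots> \<le> K" unfolding K_def S_def
    proof (rule mult_left_mono[OF sum_mono])
      fix g assume "g \<in> F"
      then have g: "g \<in> carrier G" using Fsub by auto
      have int: "integrable M (\<lambda>x. (c1 g x - c2 g x)^2)" using cSI[OF g] by (simp add: SI_real)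
      show "(\<integral>x. (koopman G T g (bN N) x - bN N x)^2 \<partial>M) \<le> (\<integral>x. (c1 g x - c2 g x)^2 \<partial>M)"
      proof (rule integral_mono_AE'[OF int])
        show "AE x in M. (koopman G T g (bN N) x - bN N x)^2 \<le> (c1 g x - c2 g x)^2"
          using bc[OF g]
        proof (rule eventually_mono)
          fix x assume eq: "c1 g x - c2 g x = koopman G T g b x - b x"
          show "(koopman G T g (bN N) x - bN N x)^2 \<le> (c1 g x - c2 g x)^2"
            unfolding eq unfolding koopman_def bN_def by (rule clip_le)
        qed
        show "AE x in M. 0 \<le> (c1 g x - c2 g x)^2" by simp
      qed
    qed simp
    finally show ?thesis .
  qed
  define A where "A R = {x \<in> space M. \<bar>b x\<bar> \<le> real R}" for R :: nat
  have Asets: "A R \<in> sets M" for R unfolding A_def by measurable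
  have "(\<lambda>R. measure M (A R)) \<longlonglongrightarrow> measure M (\<Union>R. A R)"
  proof (rule finite_Lim_measure_incseq)
    show "range A \<subseteq> sets M" using Asets by auto
    show "incseq A" unfolding incseq_def A_def by auto
  qed
  moreover have "(\<Union>R. A R) = space M"
  proof
    show "(\<Union>R. A R) \<subseteq> space M" unfolding A_def by auto
    show "space M \<subseteq> (\<Union>R. A R)"
    proof
      fix x assume "x \<in> space M"
      then have "x \<in> A (nat \<lceil>\<bar>b x\<bar>\<rceil>)" unfolding A_def using real_nat_ceiling_ge by auto
      then show "x \<in> (\<Union>R. A R)" by blast
    qed
  qed
  ultimately have "(\<lambda>R. measure M (A R)) \<longlonglongrightarrow> 1" using prob_space by simp
  then have "eventually (\<lambda>R. 1/2 < measure M (A R)) sequentially"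
    by (rule order_tendstoD(1)) simp
  then obtain R where AR: "1/2 < measure M (A R)" unfolding eventually_sequentially by auto
  have mbound: "\<bar>mN N\<bar> \<le> real R + 1 + 2 * K" if NR: "R \<le> N" for N
  proof (cases "\<bar>mN N\<bar> \<le> real R")
    case True then show ?thesis using Knn by linarith
  next
    case False
    define t where "t = \<bar>mN N\<bar> - real R"
    have tpos: "0 < t" using False unfolding t_def by linarith
    have pw: "indicator (A R) x * t^2 \<le> (bN N x - mN N)^2" for x
    proof (cases "x \<in> A R")
      case True
      then have bx: "\<bar>b x\<bar> \<le> real R" unfolding A_def by auto
      have "real R \<le> real N" using NR by simp
      then have "bN N x = b x" using bx unfolding bN_def by (simp add: abs_le_iff)
      then have "t \<le> \<bar>bN N x - mN N\<bar>" using bx unfolding t_def by linarith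
      then have "t^2 \<le> \<bar>bN N x - mN N\<bar>^2" using tpos by (intro power_mono) auto
      then show ?thesis using True by simp
    next
      case False then show ?thesis by simp
    qed
    have intd: "integrable M (\<lambda>x. (bN N x - mN N)^2)"
      using SI_diff[OF bNSI SI_const[OF fm]] by (simp add: SI_real)
    have "(\<integral>x. indicator (A R) x * t^2 \<partial>M) \<le> (\<integral>x. (bN N x - mN N)^2 \<partial>M)"
      by (rule integral_mono_AE'[OF intd]) (use pw in auto)
    moreover have "(\<integral>x. indicator (A R) x * t^2 \<partial>M) = measure M (A R) * t^2"
      using Asets[of R] sets.sets_into_space[OF Asets[of R]] by (simp add: Int_absorb2)
    ultimately have "measure M (A R) * t^2 \<le> K" using bNK[of N] by linarith
    moreover have "1/2 * t^2 \<le> measure M (A R) * t^2"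
      using AR by (intro mult_right_mono) auto
    ultimately have t2: "t^2 \<le> 2 * K" by linarith
    have "t \<le> 1 + t^2"
    proof (cases "t \<le> 1")
      case True then show ?thesis using zero_le_power2[of t] by linarith
    next
      case False
      then have "t * 1 \<le> t * t" using tpos by (intro mult_left_mono) auto
      then show ?thesis by (simp add: power2_eq_square)
    qed
    then show ?thesis using t2 unfolding t_def by linarith
  qed
  have "bounded (range (\<lambda>n. mN (n + R)))"
  proof (rule boundedI)
    fix y assume "y \<in> range (\<lambda>n. mN (n + R))"
    then obtain n where "y = mN (n + R)" by auto
    then show "norm y \<le> real R + 1 + 2 * K" using mbound[of "n + R"] by simp
  qed
  then obtain m r where r: "strict_mono (r::nat \<Rightarrow> nat)"
    and rlim: "((\<lambda>n. mN (n + R)) \<circ> r) \<longlonglongrightarrow> m"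
    using bounded_imp_convergent_subsequence by blast
  define s where "s k = r k + R" for k
  have s: "strict_mono s" using r unfolding strict_mono_def s_def by auto
  have mlim: "(\<lambda>k. mN (s k)) \<longlonglongrightarrow> m" using rlim unfolding s_def o_def .
  have lim_pt: "(\<lambda>k. ennreal ((bN (s k) x - mN (s k))^2)) \<longlonglongrightarrow> ennreal ((b x - m)^2)" for x
  proof -
    have "eventually (\<lambda>n. bN n x = b x) sequentially"
      unfolding eventually_sequentially
    proof (intro exI allI impI)
      fix n assume "nat \<lceil>\<bar>b x\<bar>\<rceil> \<le> n"
      then have "\<bar>b x\<bar> \<le> real n" using real_nat_ceiling_ge[of "\<bar>b x\<bar>"] by linarith
      then show "bN n x = b x" unfolding bN_def by (simp add: abs_le_iff)
    qed
    then have "(\<lambda>n. bN n x) \<longlonglongrightarrow> b x" by (rule tendsto_eventually)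
    from LIMSEQ_subseq_LIMSEQ[OF this s] have t1: "(\<lambda>k. bN (s k) x) \<longlonglongrightarrow> b x"
      unfolding o_def .
    show ?thesis by (rule tendsto_ennrealI[OF tendsto_power[OF tendsto_diff[OF t1 mlim]]])
  qed
  have "(\<integral>\<^sup>+x. ennreal ((b x - m)^2) \<partial>M)
      = (\<integral>\<^sup>+x. liminf (\<lambda>k. ennreal ((bN (s k) x - mN (s k))^2)) \<partial>M)"
  proof (rule nn_integral_cong)
    fix x
    show "ennreal ((b x - m)^2) = liminf (\<lambda>k. ennreal ((bN (s k) x - mN (s k))^2))"
      by (rule lim_imp_Liminf[OF trivial_limit_sequentially lim_pt, symmetric])
  qed
  also have "\<dots> \<le> liminf (\<lambda>k. \<integral>\<^sup>+x. ennreal ((bN (s k) x - mN (s k))^2) \<partial>M)"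
    by (rule nn_integral_liminf) measurable
  also have "\<dots> \<le> ennreal K"
  proof (rule Liminf_le)
    show "sequentially \<noteq> bot" by simp
    show "\<forall>\<^sub>F k in sequentially. (\<integral>\<^sup>+x. ennreal ((bN (s k) x - mN (s k))^2) \<partial>M) \<le> ennreal K"
    proof (rule always_eventually, rule allI)
      fix k
      have intd: "integrable M (\<lambda>x. (bN (s k) x - mN (s k))^2)"
        using SI_diff[OF bNSI SI_const[OF fm]] by (simp add: SI_real)
      have "(\<integral>\<^sup>+x. ennreal ((bN (s k) x - mN (s k))^2) \<partial>M) = ennreal (\<integral>x. (bN (s k) x - mN (s k))^2 \<partial>M)"
        by (rule nn_integral_eq_integral[OF intd]) simp
      also have "\<dots> \<le> ennreal K" by (rule ennreal_leI[OF bNK])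
      finally show "(\<integral>\<^sup>+x. ennreal ((bN (s k) x - mN (s k))^2) \<partial>M) \<le> ennreal K" .
    qed
  qed
  also have "\<dots> < \<infinity>" by simp
  finally have "(\<integral>\<^sup>+x. ennreal ((b x - m)^2) \<partial>M) < \<infinity>" .
  then have "integrable M (\<lambda>x. (b x - m)^2)"
    by (intro integrableI_nonneg) auto
  then have bSI: "square_integrable M (\<lambda>x. b x - m)" by (simp add: SI_real)
  show ?thesis unfolding L2_coboundary_def
  proof (intro exI[of _ "\<lambda>x. b x - m"] conjI ballI)
    show "square_integrable M (\<lambda>x. b x - m)" by (rule bSI)
    fix g assume g: "g \<in> carrier G"
    show "AE x in M. c1 g x - c2 g x = koopman G T g (\<lambda>x. b x - m) x - (b x - m)"
      using bc[OF g] by (rule eventually_mono) (simp add: koopman_def)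
  qed
qed

end
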